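(* Let $\mathcal{Q}=\{-1,0,1\}$ and, for $t\in\mathbb{R}$, let $[t]_{\mathcal{Q}}=\arg\min_{z\in\mathcal{Q}}|t-z|$ (nearest rounding), applied coordinatewise to vectors in $\mathbb{R}^d$. Fix $\boldsymbol{w}\in\mathbb{R}^d$ and a maximal step size $\eta>0$. Consider the greedy procedure: $\boldsymbol{r}_1=\boldsymbol{w}$, and for $i=1,2,\dots$ (until termination, i.e. until the residual becomes $\boldsymbol{0}$), $$a_i^*=\arg\min_{a\in G_i}\left\|\boldsymbol{r}_i-a\left[\tfrac{\boldsymbol{r}_i}{a}\right]_{\mathcal{Q}}\right\|,\qquad \tilde{\boldsymbol{w}}_i^*=\left[\tfrac{\boldsymbol{r}_i}{a_i^*}\right]_{\mathcal{Q}},\qquad \boldsymbol{r}_{i+1}=\boldsymbol{r}_i-a_i^*\tilde{\boldsymbol{w}}_i^*,$$ where the grid search range is $G_i=\{k\gamma_i : k\in\mathbb{Z}_{>0},\ k\gamma_i\le 2(2^{2-1}-1)\|\boldsymbol{r}_i\|\}$ with step size $\gamma_i>0$. Assume that $\gamma_i\le\min(\Delta_{\boldsymbol{r}_i},\eta)$ for every step $i$ before termination. Let $\ell(\boldsymbol{r},a,\boldsymbol{v})=\|\boldsymbol{r}-a\boldsymbol{v}\|$. Then there is a constant $c>0$ such that $$\ell(\boldsymbol{r}_i,a_i^*,\tilde{\boldsymbol{w}}_i^* )=\mathcal{O}\left(\exp(-ci)+\eta\right).$$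
   Context: $\|\cdot\|$ denotes the Euclidean norm. For $\boldsymbol{t}=(t_1,\dots,t_d)\in\mathbb{R}^d$, the minimal gap of $\boldsymbol{t}$ is $\Delta_{\boldsymbol{t}}=\min\left\{\frac{\left|\,|t_i|-|t_j|\,\right|}{2} : i,j\in\{1,\dots,d\},\ t_i\neq t_j\right\}$. This is the case of bit-width $b=2$ of the $b$-bit quantization set, i.e. the grid $[-1:\epsilon_b:1]$ with $\epsilon_b=1/(2^{b-1}-1)$. *)

theory Defs
  imports "HOL-Analysis.Analysis"
begin

definition Qset :: "real set" where
  "Qset = {-1, 0, 1}"

definition Qround :: "real \<Rightarrow> real" where
  "Qround t = (ARG_MIN (\<lambda>z. \<bar>t - z\<bar>) z. z \<in> Qset)"

definition Qvec :: "real ^ 'n \<Rightarrow> real ^ 'n" where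
  "Qvec v = (\<chi> j. Qround (v $ j))"

text \<open>Minimal gap; min over the empty set is +infinity.\<close>
definition min_gap :: "real ^ 'n \<Rightarrow> ereal" where
  "min_gap t =
     (let S = {\<bar>\<bar>t $ i\<bar> - \<bar>t $ j\<bar>\<bar> / 2 | i j. t $ i \<noteq> t $ j}
      in if S = {} then \<infinity> else ereal (Min S))"

definition qloss :: "real ^ 'n \<Rightarrow> real \<Rightarrow> real ^ 'n \<Rightarrow> real" where
  "qloss r a v = norm (r - a *\<^sub>R v)"

text \<open>Grid search range with step size gamma (b = 2).\<close>
definition grid :: "real ^ 'n \<Rightarrow> real \<Rightarrow> real set" where
  "grid r \<gamma> = {real k * \<gamma> | k :: nat.
                 0 < k \<and> real k * \<gamma> \<le> 2 * (2 ^ (2 - 1) - 1) * norm r}"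

definition grid_obj :: "real ^ 'n \<Rightarrow> real \<Rightarrow> real" where
  "grid_obj r a = qloss r a (Qvec ((1 / a) *\<^sub>R r))"

text \<open>Step i has not terminated: all residuals r_1..r_i are nonzero.\<close>
definition active :: "(nat \<Rightarrow> real ^ 'n) \<Rightarrow> nat \<Rightarrow> bool" where
  "active r i = (\<forall>j \<in> {1..i}. r j \<noteq> 0)"

end

theory Submission imports Defs begin

lemma norm_sq: "(norm (x::real^'n))^2 = (\<Sum>i\<in>UNIV. (x$i)^2)"
  by (simp add: norm_vec_def L2_set_def sum_nonneg)

lemma Qround_min:
  assumes "z \<in> Qset" shows "\<bar>t - Qround t\<bar> \<le> \<bar>t - z\<bar>"
proof -
  have "finite Qset" "Qset \<noteq> {}" by (auto simp: Qset_def)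
  from arg_min_if_finite(2)[OF this, of "\<lambda>z. \<bar>t - z\<bar>"] assms
  show ?thesis unfolding Qround_def arg_min_on_def by force
qed

lemma coord_bound:
  assumes "a > 0" "z \<in> Qset"
  shows "\<bar>r - a * Qround (r / a)\<bar> \<le> \<bar>r - a * z\<bar>"
proof -
  have e: "\<And>q. \<bar>r - a * q\<bar> = a * \<bar>r/a - q\<bar>"
  proof -
    fix q
    have "r - a * q = a * (r/a - q)" using assms by (simp add: field_simps)
    then show "\<bar>r - a * q\<bar> = a * \<bar>r/a - q\<bar>" using assms by (simp add: abs_mult)
  qed
  have "\<bar>r - a * Qround (r / a)\<bar> = a * \<bar>r/a - Qround (r/a)\<bar>" by (rule e)
  also have "\<dots> \<le> a * \<bar>r/a - z\<bar>" using Qround_min[OF assms(2)] assms(1) by simp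
  also have "\<dots> = \<bar>r - a * z\<bar>" by (rule e[symmetric])
  finally show ?thesis .
qed

lemma grid_obj_comp:
  "(r - a *\<^sub>R Qvec ((1 / a) *\<^sub>R r)) $ j = r $ j - a * Qround (r $ j / a)"
  by (simp add: Qvec_def)

lemma grid_obj_le_norm:
  assumes "a > 0" shows "grid_obj r a \<le> norm r"
  unfolding grid_obj_def qloss_def
proof (rule norm_le_componentwise_cart)
  fix j
  show "norm ((r - a *\<^sub>R Qvec ((1 / a) *\<^sub>R r)) $ j) \<le> norm (r $ j)"
    using coord_bound[OF assms, of 0 "r$j"] by (simp add: Qvec_def Qset_def)
qed

lemma step_bound:
  fixes r :: "real^'n"
  assumes r0: "r \<noteq> 0" and g0: "0 < \<gamma>" and ge: "\<gamma> \<le> \<eta>"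
    and am: "is_arg_min (grid_obj r) (\<lambda>x. x \<in> grid r \<gamma>) a"
  shows "grid_obj r a \<le> exp (- (1 / (2 * real CARD('n)))) * norm r + sqrt (real CARD('n)) * \<eta>"
proof -
  define d where "d = real CARD('n)"
  define \<rho> where "\<rho> = exp (- (1 / (2 * real CARD('n))))"
  have d1: "d \<ge> 1" unfolding d_def by (simp add: Suc_leI)
  have sd1: "sqrt d \<ge> 1" using d1 by simp
  have \<rho>0: "\<rho> \<ge> 0" unfolding \<rho>_def by simp
  have \<rho>sq: "\<rho>^2 \<ge> 1 - 1/d"
  proof -
    have "\<rho>^2 = exp (- (1/d))" unfolding \<rho>_def d_def
      by (simp add: power2_eq_square mult_exp_exp)
    moreover have "1 + (- (1/d)) \<le> exp (- (1/d))" by (rule exp_ge_add_one_self)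
    ultimately show ?thesis by simp
  qed
  have ain: "a \<in> grid r \<gamma>" and amin: "\<And>y. y \<in> grid r \<gamma> \<Longrightarrow> grid_obj r a \<le> grid_obj r y"
    using am unfolding is_arg_min_def by (auto simp: not_less)
  have apos: "a > 0" using ain g0 unfolding grid_def by auto
  have le_norm: "grid_obj r a \<le> norm r" by (rule grid_obj_le_norm[OF apos])
  define M where "M = Max (range (\<lambda>j. \<bar>r$j\<bar>))"
  have "M \<in> range (\<lambda>j. \<bar>r$j\<bar>)" unfolding M_def by (rule Max_in) auto
  then obtain j0 where j0: "\<bar>r$j0\<bar> = M" by auto
  have Mge: "\<And>j. \<bar>r$j\<bar> \<le> M" unfolding M_def by (rule Max_ge) auto
  have MN: "M \<le> norm r" using j0 component_le_norm_cart by metis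
  obtain i where "r$i \<noteq> 0" using r0 by (metis vec_eq_iff zero_index)
  then have Mpos: "M > 0" using Mge[of i] by linarith
  have Nsq: "(norm r)^2 \<le> d * M^2"
  proof -
    have "(norm r)^2 = (\<Sum>j\<in>UNIV. (r$j)^2)" by (rule norm_sq)
    also have "\<dots> \<le> of_nat (card (UNIV::'n set)) * M^2"
      by (rule sum_bounded_above) (metis Mge abs_le_square_iff abs_of_pos Mpos)
    finally show ?thesis unfolding d_def by simp
  qed
  have NsM: "norm r \<le> sqrt d * M"
  proof -
    have "(sqrt d * M)^2 = d * M^2" using d1 by (simp add: power_mult_distrib)
    then show ?thesis using Nsq Mpos d1 by (metis norm_ge_zero power2_le_imp_le mult_nonneg_nonneg real_sqrt_ge_zero less_imp_le order_trans zero_le_one)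
  qed
  show ?thesis
  proof (cases "\<gamma> > M")
    case True
    have "grid_obj r a \<le> sqrt d * \<gamma>"
      using le_norm NsM True sd1 by (smt (verit) mult_left_mono real_sqrt_ge_zero)
    also have "\<dots> \<le> sqrt d * \<eta>" using ge sd1 by (intro mult_left_mono) auto
    finally show ?thesis unfolding d_def
      using \<rho>0 \<rho>_def by (smt (verit) norm_ge_zero mult_nonneg_nonneg)
  next
    case False
    define k where "k = nat (ceiling (M / \<gamma>))"
    define a' where "a' = real k * \<gamma>"
    have "M / \<gamma> \<ge> 1" using False g0 by simp
    then have k1: "k \<ge> 1" unfolding k_def by linarith
    have "real k \<ge> M / \<gamma>" "real k < M / \<gamma> + 1" unfolding k_def
      using \<open>M / \<gamma> \<ge> 1\<close> by linarith+
    then have a'M: "a' \<ge> M" "a' < M + \<gamma>" unfolding a'_def using g0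
    proof -
      have "real k * \<gamma> < (M / \<gamma> + 1) * \<gamma>" using \<open>real k < M / \<gamma> + 1\<close> g0 by (rule mult_strict_right_mono)
      also have "\<dots> = M + \<gamma>" using g0 by (simp add: field_simps)
      finally show "real k * \<gamma> < M + \<gamma>" .
      have "M = (M / \<gamma>) * \<gamma>" using g0 by simp
      also have "\<dots> \<le> real k * \<gamma>" using \<open>real k \<ge> M / \<gamma>\<close> g0 by (intro mult_right_mono) auto
      finally show "M \<le> real k * \<gamma>" .
    qed
    have a'in: "a' \<in> grid r \<gamma>" unfolding grid_def
      using k1 a'M False MN by (auto simp: a'_def intro!: exI[of _ k])
    have a'pos: "a' > 0" using a'M Mpos by simp
    define e where "e = r - a' *\<^sub>R Qvec ((1 / a') *\<^sub>R r)"
    have ej: "\<And>j. \<bar>e$j\<bar> \<le> \<bar>r$j\<bar>"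
      using coord_bound[OF a'pos, of 0] by (simp add: e_def Qvec_def Qset_def)
    have ej0: "\<bar>e$j0\<bar> \<le> a' - M"
    proof -
      have "sgn (r$j0) \<in> Qset" by (simp add: Qset_def sgn_if)
      from coord_bound[OF a'pos this, of "r$j0"]
      have "\<bar>e$j0\<bar> \<le> \<bar>r$j0 - a' * sgn (r$j0)\<bar>" by (simp add: e_def Qvec_def)
      also have "\<dots> = a' - M" using j0 a'M Mpos by (auto simp: sgn_if abs_if)
      finally show ?thesis .
    qed
    have esq: "(norm e)^2 \<le> ((norm r)^2 - M^2) + (a' - M)^2"
    proof -
      have "(norm e)^2 = (e$j0)^2 + (\<Sum>j\<in>UNIV-{j0}. (e$j)^2)"
        by (simp add: norm_sq sum.remove[of UNIV j0])
      also have "\<dots> \<le> (a' - M)^2 + (\<Sum>j\<in>UNIV-{j0}. (r$j)^2)"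
      proof (rule add_mono)
        show "(e$j0)^2 \<le> (a' - M)^2" using ej0 by (metis abs_ge_zero abs_le_square_iff abs_of_nonneg order_trans)
        show "(\<Sum>j\<in>UNIV-{j0}. (e$j)^2) \<le> (\<Sum>j\<in>UNIV-{j0}. (r$j)^2)"
          by (rule sum_mono) (simp add: ej abs_le_square_iff[symmetric])
      qed
      also have "(\<Sum>j\<in>UNIV-{j0}. (r$j)^2) = (norm r)^2 - M^2"
        using j0 by (simp add: norm_sq sum.remove[of UNIV j0]) (metis power2_abs)
      finally show ?thesis by simp
    qed
    have X: "(norm r)^2 - M^2 \<le> (\<rho> * norm r)^2"
    proof -
      have "M^2 \<ge> (norm r)^2 / d" using Nsq d1 by (simp add: divide_le_eq mult.commute)
      then have "(norm r)^2 - M^2 \<le> (1 - 1/d) * (norm r)^2" by (simp add: algebra_simps)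
      also have "\<dots> \<le> \<rho>^2 * (norm r)^2" using \<rho>sq by (simp add: mult_right_mono)
      finally show ?thesis by (simp add: power_mult_distrib)
    qed
    have "(norm e)^2 \<le> (\<rho> * norm r + \<gamma>)^2"
    proof -
      have "(a' - M)^2 \<le> \<gamma>^2" using a'M by (simp add: power_mono)
      moreover have "0 \<le> 2 * (\<rho> * norm r) * \<gamma>" using \<rho>0 g0 by simp
      ultimately show ?thesis using esq X unfolding power2_sum by linarith
    qed
    then have "norm e \<le> \<rho> * norm r + \<gamma>"
      by (rule power2_le_imp_le) (use \<rho>0 g0 in auto)
    moreover have "grid_obj r a \<le> norm e"
      using amin[OF a'in] by (simp add: grid_obj_def qloss_def e_def)
    moreover have "\<gamma> \<le> sqrt d * \<eta>"
    proof -
      have "1 * \<eta> \<le> sqrt d * \<eta>" using sd1 ge g0 by (intro mult_right_mono) auto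
      then show ?thesis using ge by simp
    qed
    ultimately show ?thesis unfolding \<rho>_def d_def by linarith
  qed
qed


theorem theorem1:
  fixes w :: "real ^ 'n"
  shows "\<exists>c > 0. \<exists>C. \<forall>(\<eta>::real) (r :: nat \<Rightarrow> real ^ 'n) (a :: nat \<Rightarrow> real)
            (wt :: nat \<Rightarrow> real ^ 'n) (\<gamma> :: nat \<Rightarrow> real).
     \<eta> > 0 \<longrightarrow>
     r 1 = w \<longrightarrow>
     (\<forall>i \<ge> 1. active r i \<longrightarrow>
        0 < \<gamma> i \<and> ereal (\<gamma> i) \<le> min (min_gap (r i)) (ereal \<eta>) \<and>
        is_arg_min (grid_obj (r i)) (\<lambda>x. x \<in> grid (r i) (\<gamma> i)) (a i) \<and>
        wt i = Qvec ((1 / a i) *\<^sub>R r i) \<and>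
        r (Suc i) = r i - a i *\<^sub>R wt i) \<longrightarrow>
     (\<forall>i \<ge> 1. active r i \<longrightarrow>
        qloss (r i) (a i) (wt i) \<le> C * (exp (- c * real i) + \<eta>))"
proof -
  define c where "c = 1 / (2 * real CARD('n))"
  define \<rho> where "\<rho> = exp (- c)"
  define K where "K = sqrt (real CARD('n))"
  define C where "C = norm w + K / (1 - \<rho>)"
  have c0: "c > 0" unfolding c_def by simp
  have \<rho>1: "\<rho> < 1" "\<rho> > 0" unfolding \<rho>_def using c0 by auto
  have K0: "K \<ge> 0" unfolding K_def by simp
  show ?thesis
  proof (rule exI[of _ c], rule conjI[OF c0], rule exI[of _ C], intro allI impI)
    fix \<eta> :: real and r :: "nat \<Rightarrow> real ^ 'n" and a :: "nat \<Rightarrow> real"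
      and wt :: "nat \<Rightarrow> real ^ 'n" and \<gamma> :: "nat \<Rightarrow> real" and i :: nat
    assume \<eta>0: "\<eta> > 0" and r1: "r 1 = w"
      and H: "\<forall>i \<ge> 1. active r i \<longrightarrow>
        0 < \<gamma> i \<and> ereal (\<gamma> i) \<le> min (min_gap (r i)) (ereal \<eta>) \<and>
        is_arg_min (grid_obj (r i)) (\<lambda>x. x \<in> grid (r i) (\<gamma> i)) (a i) \<and>
        wt i = Qvec ((1 / a i) *\<^sub>R r i) \<and>
        r (Suc i) = r i - a i *\<^sub>R wt i"
      and i1: "i \<ge> 1" and act: "active r i"
    have A: "qloss (r j) (a j) (wt j) = norm (r (Suc j)) \<and>
             norm (r (Suc j)) \<le> \<rho> * norm (r j) + K * \<eta>" if "j \<ge> 1" "active r j" for j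
    proof -
      from H that have h: "0 < \<gamma> j" "ereal (\<gamma> j) \<le> min (min_gap (r j)) (ereal \<eta>)"
        "is_arg_min (grid_obj (r j)) (\<lambda>x. x \<in> grid (r j) (\<gamma> j)) (a j)"
        "wt j = Qvec ((1 / a j) *\<^sub>R r j)" "r (Suc j) = r j - a j *\<^sub>R wt j" by auto
      have ge: "\<gamma> j \<le> \<eta>" using h(2) by (metis ereal_less_eq(3) min.bounded_iff)
      have rj: "r j \<noteq> 0" using that unfolding active_def by auto
      have q: "qloss (r j) (a j) (wt j) = norm (r (Suc j))" using h(5) by (simp add: qloss_def)
      have "grid_obj (r j) (a j) = qloss (r j) (a j) (wt j)" using h(4) by (simp add: grid_obj_def)
      with step_bound[OF rj h(1) ge h(3)] q show ?thesis
        unfolding \<rho>_def K_def c_def by simp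
    qed
    have B: "active r (Suc n) \<longrightarrow> norm (r (Suc n)) \<le> \<rho>^n * norm w + K * \<eta> / (1 - \<rho>)" for n
    proof (induction n)
      case 0
      then show ?case using r1 K0 \<eta>0 \<rho>1 by simp
    next
      case (Suc n)
      show ?case
      proof
        assume a2: "active r (Suc (Suc n))"
        then have a1: "active r (Suc n)" unfolding active_def by auto
        have "norm (r (Suc (Suc n))) \<le> \<rho> * norm (r (Suc n)) + K * \<eta>"
          using A[of "Suc n"] a1 by simp
        also have "\<dots> \<le> \<rho> * (\<rho>^n * norm w + K * \<eta> / (1 - \<rho>)) + K * \<eta>"
          using Suc a1 \<rho>1 by (simp add: mult_left_mono)
        also have "\<dots> = \<rho>^(Suc n) * norm w + K * \<eta> / (1 - \<rho>)"
          using \<rho>1 by (simp add: field_simps)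
        finally show "norm (r (Suc (Suc n))) \<le> \<rho>^(Suc n) * norm w + K * \<eta> / (1 - \<rho>)" .
      qed
    qed
    obtain n where n: "i = Suc n" using i1 by (cases i) auto
    have "qloss (r i) (a i) (wt i) \<le> \<rho> * norm (r i) + K * \<eta>" using A[OF i1 act] by simp
    also have "\<dots> \<le> \<rho> * (\<rho>^n * norm w + K * \<eta> / (1 - \<rho>)) + K * \<eta>"
      using B[of n] act n \<rho>1 by (simp add: mult_left_mono)
    also have "\<dots> = \<rho>^i * norm w + K / (1 - \<rho>) * \<eta>"
      using \<rho>1 n by (simp add: field_simps)
    also have "\<rho>^i = exp (- c * real i)" unfolding \<rho>_def
      by (simp add: exp_of_nat_mult[symmetric] mult.commute)
    also have "exp (- c * real i) * norm w + K / (1 - \<rho>) * \<eta> \<le> C * (exp (- c * real i) + \<eta>)"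
    proof -
      have "0 \<le> K / (1 - \<rho>)" using K0 \<rho>1 by simp
      then have "0 \<le> K / (1 - \<rho>) * exp (- c * real i)" "0 \<le> norm w * \<eta>" using \<eta>0 by (intro mult_nonneg_nonneg; simp)+
      then show ?thesis unfolding C_def by (simp add: algebra_simps)
    qed
    finally have "qloss (r i) (a i) (wt i) \<le> C * (exp (- c * real i) + \<eta>)" .
    then show "qloss (r i) (a i) (wt i) \<le> C * (exp (- c * real i) + \<eta>)" .
  qed
qed

end
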